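(* Let $X$ be a finite nonempty set, $\mathcal F$ a family of subsets of $X$ whose union is $X$, with fractional covering number $\tau^*:=\tau^*(X,\mathcal F)$, and let $k$ be a positive integer. Then \[\tau_k(\mathcal F)\le\left\lceil\tau^*\left(k+\tfrac32\ln|X|+\tfrac32\sqrt{(4k+\ln|X|)\ln|X|}\right)\right\rceil\le\left\lceil 6\tau^*\max\{\ln|X|,k\}\right\rceil.\]
   Context: The $k$-fold covering number $\tau_k(\mathcal F)$ is the minimum cardinality of a multi-subfamily of $\mathcal F$ such that each point of $X$ is contained in at least $k$ members of the subfamily (counted with multiplicity). A fractional covering of $X$ by $\mathcal F$ is a map $w:\mathcal F\to[0,\infty)$ with $\sum_{F\in\mathcal F,\,x\in F}w(F)\ge1$ for all $x\in X$; the fractional covering number $\tau^*(X,\mathcal F)$ is the infimum of $\sum_{F\in\mathcal F}w(F)$ over all fractional coverings $w$. *)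

theory Defs
  imports "HOL-Analysis.Analysis" "HOL-Library.Multiset"
begin

definition is_k_fold_cover :: "nat \<Rightarrow> 'a set \<Rightarrow> 'a set set \<Rightarrow> 'a set multiset \<Rightarrow> bool" where
  "is_k_fold_cover k X F M \<longleftrightarrow>
     set_mset M \<subseteq> F \<and> (\<forall>x\<in>X. k \<le> size (filter_mset (\<lambda>A. x \<in> A) M))"

definition k_fold_covering_number :: "nat \<Rightarrow> 'a set \<Rightarrow> 'a set set \<Rightarrow> nat" where
  "k_fold_covering_number k X F = (LEAST n. \<exists>M. is_k_fold_cover k X F M \<and> size M = n)"

definition is_fractional_cover :: "'a set \<Rightarrow> 'a set set \<Rightarrow> ('a set \<Rightarrow> real) \<Rightarrow> bool" where
  "is_fractional_cover X F w \<longleftrightarrow>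
     (\<forall>A\<in>F. 0 \<le> w A) \<and> (\<forall>x\<in>X. 1 \<le> (\<Sum>A\<in>{A\<in>F. x \<in> A}. w A))"

definition fractional_covering_number :: "'a set \<Rightarrow> 'a set set \<Rightarrow> real" where
  "fractional_covering_number X F = Inf {(\<Sum>A\<in>F. w A) | w. is_fractional_cover X F w}"

end

theory Submission imports Defs begin


definition cnt :: "'a \<Rightarrow> 'a set multiset \<Rightarrow> nat" where
  "cnt x M = size (filter_mset (\<lambda>A. x \<in> A) M)"

lemma cnt_add: "cnt x (add_mset A M) = (if x \<in> A then Suc (cnt x M) else cnt x M)"
  by (simp add: cnt_def)

lemma cnt_empty[simp]: "cnt x {#} = 0" by (simp add: cnt_def)

lemma averaging:
  fixes w g :: "'b \<Rightarrow> real"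
  assumes "finite F" "\<forall>A\<in>F. 0 \<le> w A" "sum w F > 0"
    and "(\<Sum>A\<in>F. w A * g A) \<le> sum w F * B"
  shows "\<exists>A\<in>F. g A \<le> B"
proof (rule ccontr)
  assume "\<not> ?thesis"
  hence gt: "\<forall>A\<in>F. g A > B" by auto
  obtain A0 where A0: "A0 \<in> F" "w A0 > 0"
  proof -
    have "\<exists>A\<in>F. w A > 0"
    proof (rule ccontr)
      assume "\<not> ?thesis"
      hence "\<forall>A\<in>F. w A \<le> 0" by auto
      hence "sum w F \<le> 0" by (simp add: sum_nonpos)
      thus False using assms(3) by simp
    qed
    thus ?thesis using that by blast
  qed
  have "0 < (\<Sum>A\<in>F. w A * (g A - B))"
    apply (rule sum_pos2[OF assms(1) A0(1)])
    using A0 gt apply simp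
    using assms(2) gt by (simp add: less_imp_le)
  also have "\<dots> = (\<Sum>A\<in>F. w A * g A) - sum w F * B"
    by (simp add: algebra_simps sum_subtractf sum_distrib_left)
  finally show False using assms(4) by simp
qed

lemma step:
  fixes lam T :: real
  assumes finF: "finite F" and finX: "finite X" and fc: "is_fractional_cover X F w"
    and T: "T = sum w F" "T > 0" and lam: "0 \<le> lam" "lam \<le> 1"
  shows "\<exists>A\<in>F. (\<Sum>x\<in>X. lam ^ cnt x (add_mset A M)) \<le> (1 - (1-lam)/T) * (\<Sum>x\<in>X. lam ^ cnt x M)"
proof -
  have wnn: "\<forall>A\<in>F. 0 \<le> w A" using fc by (simp add: is_fractional_cover_def)
  have inner: "(\<Sum>A\<in>F. w A * (if x \<in> A then lam else 1)) \<le> T - (1 - lam)" if x: "x \<in> X" for x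
  proof -
    have cov: "1 \<le> (\<Sum>A\<in>{A\<in>F. x \<in> A}. w A)" using fc x by (simp add: is_fractional_cover_def)
    have "(\<Sum>A\<in>F. w A * (if x \<in> A then lam else 1)) = (\<Sum>A\<in>F. w A - (1-lam) * (if x \<in> A then w A else 0))"
      by (rule sum.cong) (auto simp: algebra_simps)
    also have "\<dots> = T - (1-lam) * (\<Sum>A\<in>{A\<in>F. x \<in> A}. w A)"
      by (simp add: sum_subtractf sum_distrib_left[symmetric] sum.inter_filter[OF finF] T)
    also have "\<dots> \<le> T - (1-lam)" using mult_left_mono[OF cov, of "1-lam"] lam by simp
    finally show ?thesis .
  qed
  have "(\<Sum>A\<in>F. w A * (\<Sum>x\<in>X. lam ^ cnt x (add_mset A M)))
      = (\<Sum>A\<in>F. \<Sum>x\<in>X. lam ^ cnt x M * (w A * (if x \<in> A then lam else 1)))"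
    unfolding sum_distrib_left by (intro sum.cong refl) (simp add: cnt_add)
  also have "\<dots> = (\<Sum>x\<in>X. lam ^ cnt x M * (\<Sum>A\<in>F. w A * (if x \<in> A then lam else 1)))"
    by (subst sum.swap) (simp add: sum_distrib_left)
  also have "\<dots> \<le> (\<Sum>x\<in>X. lam ^ cnt x M * (T - (1 - lam)))"
    by (rule sum_mono, rule mult_left_mono) (use inner lam in auto)
  also have "\<dots> = T * ((1 - (1-lam)/T) * (\<Sum>x\<in>X. lam ^ cnt x M))"
  proof -
    have "(\<Sum>x\<in>X. lam ^ cnt x M * (T - (1 - lam))) = (\<Sum>x\<in>X. lam ^ cnt x M) * (T - (1 - lam))"
      by (simp add: sum_distrib_right)
    also have "\<dots> = T * ((1 - (1-lam)/T) * (\<Sum>x\<in>X. lam ^ cnt x M))"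
      using T(2) by (simp add: field_simps)
    finally show ?thesis .
  qed
  finally show ?thesis
    using averaging[OF finF wnn, of "\<lambda>A. \<Sum>x\<in>X. lam ^ cnt x (add_mset A M)"] T by simp
qed

lemma iterate:
  fixes lam T :: real
  assumes finF: "finite F" and finX: "finite X" and fc: "is_fractional_cover X F w"
    and T: "T = sum w F" "T \<ge> 1" and lam: "0 \<le> lam" "lam \<le> 1"
  shows "\<exists>M. set_mset M \<subseteq> F \<and> size M = n \<and>
     (\<Sum>x\<in>X. lam ^ cnt x M) \<le> real (card X) * (1 - (1-lam)/T) ^ n"
proof (induction n)
  case 0
  show ?case by (rule exI[of _ "{#}"]) simp
next
  case (Suc n)
  then obtain M where M: "set_mset M \<subseteq> F" "size M = n"
    "(\<Sum>x\<in>X. lam ^ cnt x M) \<le> real (card X) * (1 - (1-lam)/T) ^ n" by blast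
  obtain A where A: "A \<in> F"
    "(\<Sum>x\<in>X. lam ^ cnt x (add_mset A M)) \<le> (1 - (1-lam)/T) * (\<Sum>x\<in>X. lam ^ cnt x M)"
    using step[OF finF finX fc T(1) _ lam, of M] T by auto
  have q: "0 \<le> 1 - (1-lam)/T" using T lam by (simp add: field_simps)
  have "(\<Sum>x\<in>X. lam ^ cnt x (add_mset A M)) \<le> (1 - (1-lam)/T) * (real (card X) * (1 - (1-lam)/T) ^ n)"
    using A(2) mult_left_mono[OF M(3) q] by linarith
  thus ?case using M A by (intro exI[of _ "add_mset A M"]) (simp add: algebra_simps)
qed

lemma cover_exists:
  fixes lam T :: real and N k :: nat
  assumes finF: "finite F" and finX: "finite X" and fc: "is_fractional_cover X F w"
    and T: "T = sum w F" "T \<ge> 1" and lam: "0 < lam" "lam < 1" and Xne: "X \<noteq> {}"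
    and cond: "ln (real (card X)) < (1-lam) * N / T + real (k - 1) * ln lam"
  shows "\<exists>M. is_k_fold_cover k X F M \<and> size M = N"
proof -
  obtain M where M: "set_mset M \<subseteq> F" "size M = N"
     "(\<Sum>x\<in>X. lam ^ cnt x M) \<le> real (card X) * (1 - (1-lam)/T) ^ N"
    using iterate[OF finF finX fc T, of lam N] lam by auto
  have "\<forall>x\<in>X. k \<le> cnt x M"
  proof (rule ccontr)
    assume "\<not> ?thesis"
    then obtain x where x: "x \<in> X" "cnt x M < k" by auto
    have "lam ^ (k - 1) \<le> lam ^ cnt x M"
      by (rule power_decreasing) (use x lam in auto)
    also have "\<dots> \<le> (\<Sum>x\<in>X. lam ^ cnt x M)"
      by (rule member_le_sum) (use x finX lam in auto)
    also have "\<dots> \<le> real (card X) * (1 - (1-lam)/T) ^ N" by (rule M(3))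
    finally have ineq: "lam ^ (k - 1) \<le> real (card X) * (1 - (1-lam)/T) ^ N" .
    have qpos: "0 < 1 - (1-lam)/T" using T lam by (simp add: field_simps)
    have cpos: "0 < real (card X)" using finX Xne by (simp add: card_gt_0_iff)
    have "ln (lam ^ (k - 1)) \<le> ln (real (card X) * (1 - (1-lam)/T) ^ N)"
      using ineq lam qpos cpos by (subst ln_le_cancel_iff) auto
    hence "real (k - 1) * ln lam \<le> ln (real (card X)) + real N * ln (1 - (1-lam)/T)"
      using lam qpos cpos by (simp add: ln_mult_pos[OF cpos zero_less_power[OF qpos]] ln_realpow)
    moreover have "ln (1 - (1-lam)/T) \<le> - ((1-lam)/T)"
      using ln_le_minus_one[OF qpos] by simp
    hence "real N * ln (1 - (1-lam)/T) \<le> real N * (- ((1-lam)/T))"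
      by (rule mult_left_mono) simp
    ultimately show False using cond by (simp add: field_simps)
  qed
  thus ?thesis using M by (auto simp: is_k_fold_cover_def cnt_def)
qed

theorem mainTheorem10:
  fixes X :: "'a set" and F :: "'a set set" and k :: nat
  assumes "finite X" and "X \<noteq> {}"
    and "F \<subseteq> Pow X" and "\<Union>F = X"
    and "k > 0"
  defines "t \<equiv> fractional_covering_number X F"
  defines "L \<equiv> ln (real (card X))"
  shows "int (k_fold_covering_number k X F)
           \<le> \<lceil>t * (real k + 3/2 * L + 3/2 * sqrt ((4 * real k + L) * L))\<rceil>
       \<and> \<lceil>t * (real k + 3/2 * L + 3/2 * sqrt ((4 * real k + L) * L))\<rceil>
           \<le> \<lceil>6 * t * max L (real k)\<rceil>"
proof -
  note finX = assms(1) and Xne = assms(2) and FX = assms(3) and UF = assms(4) and kpos = assms(5)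
  define c where "c = real k + 3/2 * L + 3/2 * sqrt ((4 * real k + L) * L)"
  define S where "S = {(\<Sum>A\<in>F. w A) | w. is_fractional_cover X F w}"
  have finF: "finite F" using FX finX by (meson finite_Pow_iff finite_subset)
  have cardpos: "0 < card X" using finX Xne by (simp add: card_gt_0_iff)
  have L0: "L \<ge> 0" unfolding L_def using cardpos by simp
  obtain x0 where x0: "x0 \<in> X" using Xne by blast
  have S1: "s \<ge> 1" if "s \<in> S" for s
  proof -
    obtain w where w: "s = (\<Sum>A\<in>F. w A)" "is_fractional_cover X F w" using \<open>s \<in> S\<close> S_def by auto
    have "1 \<le> (\<Sum>A\<in>{A\<in>F. x0 \<in> A}. w A)" using w(2) x0 by (simp add: is_fractional_cover_def)
    also have "\<dots> \<le> (\<Sum>A\<in>F. w A)"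
      by (rule sum_mono2) (use finF w(2) in \<open>auto simp: is_fractional_cover_def\<close>)
    finally show ?thesis using w by simp
  qed
  have fc1: "is_fractional_cover X F (\<lambda>_. 1)"
    unfolding is_fractional_cover_def
  proof (intro conjI ballI)
    fix x assume "x \<in> X"
    then obtain A where "A \<in> F" "x \<in> A" using UF by blast
    hence "{A\<in>F. x \<in> A} \<noteq> {}" by blast
    hence "card {A\<in>F. x \<in> A} \<ge> 1" using finF by (simp add: Suc_leI card_gt_0_iff)
    thus "1 \<le> (\<Sum>A\<in>{A\<in>F. x \<in> A}. 1::real)" by simp
  qed simp
  have Sne: "S \<noteq> {}" using fc1 S_def by blast
  have bdd: "bdd_below S" using S1 by (meson bdd_below.I)
  have t_eq: "t = Inf S" unfolding t_def fractional_covering_number_def S_def by simp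
  have t1: "t \<ge> 1" unfolding t_eq by (rule cInf_greatest[OF Sne]) (use S1 in auto)
  have c0: "c \<ge> real k" unfolding c_def using L0 by simp
  have second: "\<lceil>t * c\<rceil> \<le> \<lceil>6 * t * max L (real k)\<rceil>"
  proof -
    define m where "m = max L (real k)"
    have m0: "0 \<le> m" "L \<le> m" "real k \<le> m" unfolding m_def by auto
    have "(4 * real k + L) * L \<le> (9/4 * m)^2"
    proof -
      have "(4 * real k + L) * L \<le> (5 * m) * m"
        by (rule mult_mono) (use m0 L0 in auto)
      moreover have "0 \<le> m * m" using m0 by simp
      ultimately show ?thesis unfolding power2_eq_square by linarith
    qed
    hence "sqrt ((4 * real k + L) * L) \<le> 9/4 * m"
      using m0 by (metis real_sqrt_le_mono real_sqrt_abs abs_of_nonneg mult_nonneg_nonneg zero_le_divide_iff zero_le_numeral)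
    hence "c \<le> 6 * m" unfolding c_def using m0 by simp
    hence "t * c \<le> t * (6 * m)" using t1 by (intro mult_left_mono) auto
    thus ?thesis unfolding m_def by (intro ceiling_mono) simp
  qed
  have first: "int (k_fold_covering_number k X F) \<le> \<lceil>t * c\<rceil>"
  proof (cases "L = 0")
    case True
    have "card X = 1" using True cardpos unfolding L_def by simp
    then obtain x where X: "X = {x}" by (rule card_1_singletonE)
    obtain A where A: "A \<in> F" "x \<in> A" using UF X by blast
    have "is_k_fold_cover k X F (replicate_mset k A)"
    proof -
      have "filter_mset (\<lambda>B. x \<in> B) (replicate_mset k A) = replicate_mset k A"
        using A(2) by (induction k) auto
      thus ?thesis unfolding is_k_fold_cover_def using A X by simp
    qed
    hence "k_fold_covering_number k X F \<le> k"
      unfolding k_fold_covering_number_def by (intro Least_le) (rule exI[of _ "replicate_mset k A"], simp)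
    moreover have "real k \<le> t * c"
    proof -
      have "c = real k" unfolding c_def using True by simp
      moreover have "1 * real k \<le> t * real k" using t1 by (intro mult_right_mono) auto
      ultimately show ?thesis by simp
    qed
    ultimately show ?thesis by linarith
  next
    case False
    hence Lpos: "L > 0" using L0 by simp
    define a where "a = sqrt (real k)"
    define b where "b = sqrt L"
    define s where "s = sqrt c"
    have a0: "a > 0" "a^2 = real k" unfolding a_def using kpos by auto
    have b0: "b > 0" "b^2 = L" unfolding b_def using Lpos by auto
    have "sqrt (4 * real k * L) \<le> sqrt ((4 * real k + L) * L)"
      by (rule real_sqrt_le_mono) (use Lpos in \<open>simp add: algebra_simps\<close>)
    moreover have "sqrt (4 * real k * L) = 2 * a * b"
      unfolding a_def b_def by (simp add: real_sqrt_mult)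
    ultimately have sq: "2 * a * b \<le> sqrt ((4 * real k + L) * L)" by simp
    have cge: "(a + b)^2 \<le> c"
    proof -
      have "(a+b)^2 = a^2 + b^2 + 2*a*b" by (simp add: power2_eq_square algebra_simps)
      also have "\<dots> \<le> c" unfolding c_def using a0 b0 sq Lpos mult_pos_pos[OF a0(1) b0(1)] by (simp only:)
      finally show ?thesis .
    qed
    have cpos: "c > 0" using c0 kpos by simp
    have s0: "s^2 = c" "s > 0" unfolding s_def using cpos by auto
    have sab: "a + b \<le> s" unfolding s_def using cge by (rule real_le_rsqrt)
    define lam where "lam = a / s"
    have lam0: "0 < lam" "lam < 1" unfolding lam_def using a0 b0 s0 sab by auto
    have lnlam: "ln lam \<ge> 1 - s / a"
    proof -
      have "ln (1/lam) \<le> 1/lam - 1" using lam0 by (intro ln_le_minus_one) simp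
      moreover have "ln (1/lam) = - ln lam" using lam0 by (simp add: ln_div)
      moreover have "1/lam = s/a" unfolding lam_def by simp
      ultimately show ?thesis by simp
    qed
    have sa1: "s / a > 1" using a0 b0 sab by simp
    have km1: "real (k - 1) = real k - 1" using kpos by simp
    have "real (k - 1) * ln lam \<ge> (real k - 1) * (1 - s/a)"
      unfolding km1 by (rule mult_left_mono) (use lnlam kpos in auto)
    moreover have "(real k - 1) * (1 - s/a) > real k * (1 - s/a)" using sa1 by (simp add: algebra_simps)
    moreover have "(1 - lam) * c + real k * (1 - s/a) = (s - a)^2"
    proof -
      have "(1 - lam) * c + real k * (1 - s/a) = (1 - a / s) * (s * s) + (a * a) * (1 - s / a)"
        unfolding lam_def using a0 s0 by (simp add: power2_eq_square)
      also have "\<dots> = (s - a)^2" using a0(1) s0(2) by (simp add: field_simps power2_eq_square)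
      finally show ?thesis .
    qed
    moreover have "(s - a)^2 \<ge> b^2" using sab b0 by (intro power_mono) auto
    ultimately have Dpos: "(1 - lam) * c + real (k - 1) * ln lam - L > 0" using b0 by linarith
    define D where "D = (1 - lam) * c + real (k - 1) * ln lam - L"
    define e where "e = (1 - lam) * c"
    have e0: "e > 0" unfolding e_def using lam0 cpos by simp
    have D0: "D > 0" using Dpos D_def by simp
    define N where "N = nat \<lceil>t * c\<rceil>"
    have tc0: "t * c \<ge> 0" using t1 cpos by simp
    have "real N = of_int \<lceil>t * c\<rceil>" unfolding N_def using tc0 by simp
    hence N1: "real N \<ge> t * c" by simp
    obtain T where T: "T \<in> S" "T * (e - D) < t * e"
    proof (cases "e - D \<le> 0")
      case True
      have "T * (e - D) \<le> 0" if "T \<in> S" for T using S1[OF that] True by (simp add: mult_nonneg_nonpos)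
      moreover have "t * e > 0" using t1 e0 by simp
      ultimately show ?thesis using that Sne by fastforce
    next
      case False
      have "t < t * e / (e - D)" using False t1 e0 D0 by (simp add: field_simps)
      then obtain T where "T \<in> S" "T < t * e / (e - D)"
        unfolding t_eq using cInf_less_iff[OF Sne bdd] by auto
      thus ?thesis using that False by (simp add: field_simps)
    qed
    obtain w where w: "T = (\<Sum>A\<in>F. w A)" "is_fractional_cover X F w" using T(1) S_def by auto
    have T1: "T \<ge> 1" using S1 T(1) by simp
    have "(1 - lam) * real N / T \<ge> e * t / T"
      unfolding e_def using N1 lam0 T1 by (intro divide_right_mono) (auto simp: mult_left_mono mult.commute)
    moreover have "e * t / T > e - D" using T(2) T1 by (simp add: field_simps)
    ultimately have cond: "L < (1 - lam) * real N / T + real (k - 1) * ln lam"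
      unfolding D_def e_def by linarith
    obtain M where M: "is_k_fold_cover k X F M" "size M = N"
      using cover_exists[OF finF finX w(2) w(1) T1 lam0 Xne, of N k] cond unfolding L_def by auto
    have "k_fold_covering_number k X F \<le> N"
      unfolding k_fold_covering_number_def by (intro Least_le) (use M in blast)
    thus ?thesis unfolding N_def using tc0 by linarith
  qed
  show ?thesis using first second unfolding c_def by simp
qed

end
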